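(* For any pair of $n$-dimensional nested lattices $\Lambda\subseteq\Lambda_f\subset\mathbb{R}^n$ and any $\mathbf{x}\in\mathbb{R}^n$, $$[Q_{\Lambda_f}(\mathbf{x})]\bmod\Lambda=Q_{\Lambda_f}\big([\mathbf{x}]\bmod\Lambda\big)+Q_{\Lambda}\Big([Q_{\Lambda_f}(\mathbf{x})]\bmod\Lambda+\mathbf{x}-Q_{\Lambda_f}(\mathbf{x})\Big).$$
   Context: For a lattice $L\subset\mathbb{R}^n$ with Voronoi region $\mathcal{V}_L$ (the set of points whose nearest lattice point is $\mathbf{0}$, ties broken systematically so that $\mathcal{V}_L$ is a fundamental domain), $Q_L(\mathbf{y})$ is the unique $\mathbf{t}\in L$ with $\mathbf{y}-\mathbf{t}\in\mathcal{V}_L$, and $[\mathbf{y}]\bmod L=\mathbf{y}-Q_L(\mathbf{y})$. *)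

theory Defs
  imports "HOL-Analysis.Analysis"
begin

definition is_lattice :: "(real ^ 'n) set \<Rightarrow> bool" where
  "is_lattice L \<longleftrightarrow> (\<exists>b :: 'n \<Rightarrow> real ^ 'n. inj b \<and> independent (range b) \<and>
      L = range (\<lambda>z :: 'n \<Rightarrow> int. \<Sum>i\<in>UNIV. of_int (z i) *\<^sub>R b i))"

text \<open>A Voronoi region of L with ties broken systematically: a set contained in the
closed Voronoi cell (all points whose nearest lattice point is 0) that is a
fundamental domain of L.\<close>
definition is_voronoi_region :: "(real ^ 'n) set \<Rightarrow> (real ^ 'n) set \<Rightarrow> bool" where
  "is_voronoi_region L V \<longleftrightarrow>
     V \<subseteq> {y. \<forall>t\<in>L. norm y \<le> norm (y - t)} \<and>
     (\<forall>y. \<exists>!t. t \<in> L \<and> y - t \<in> V)"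

definition quant :: "(real ^ 'n) set \<Rightarrow> (real ^ 'n) set \<Rightarrow> real ^ 'n \<Rightarrow> real ^ 'n" where
  "quant L V y = (THE t. t \<in> L \<and> y - t \<in> V)"

definition lmod :: "(real ^ 'n) set \<Rightarrow> (real ^ 'n) set \<Rightarrow> real ^ 'n \<Rightarrow> real ^ 'n" where
  "lmod L V y = y - quant L V y"

end

theory Submission
  imports Defs
begin

lemma lat_diff:
  assumes "is_lattice L" "a \<in> L" "b \<in> L" shows "a - b \<in> L"
proof -
  obtain bb :: "'a \<Rightarrow> real ^ 'a" where L: "L = range (\<lambda>z :: 'a \<Rightarrow> int. \<Sum>i\<in>UNIV. of_int (z i) *\<^sub>R bb i)"
    using assms(1) unfolding is_lattice_def by blast
  obtain za where za: "a = (\<Sum>i\<in>UNIV. of_int (za i) *\<^sub>R bb i)" using assms(2) L by blast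
  obtain zb where zb: "b = (\<Sum>i\<in>UNIV. of_int (zb i) *\<^sub>R bb i)" using assms(3) L by blast
  have "a - b = (\<Sum>i\<in>UNIV. of_int ((\<lambda>i. za i - zb i) i) *\<^sub>R bb i)"
    by (simp add: za zb sum_subtractf[symmetric] scaleR_diff_left)
  then show ?thesis unfolding L by (rule image_eqI[where x="\<lambda>i. za i - zb i"]) (rule UNIV_I)
qed

lemma quant_prop:
  assumes "is_voronoi_region L V" shows "quant L V y \<in> L \<and> y - quant L V y \<in> V"
proof -
  have "\<exists>!t. t \<in> L \<and> y - t \<in> V" using assms unfolding is_voronoi_region_def by blast
  then show ?thesis unfolding quant_def by (rule theI')
qed

lemma quant_eq:
  assumes "is_voronoi_region L V" "t \<in> L" "y - t \<in> V" shows "quant L V y = t"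
proof -
  have "\<exists>!t. t \<in> L \<and> y - t \<in> V" using assms unfolding is_voronoi_region_def by blast
  then show ?thesis unfolding quant_def using assms(2,3) by (simp add: the1_equality)
qed

theorem lemma5:
  fixes L Lf V Vf :: "(real ^ 'n) set" and x :: "real ^ 'n"
  assumes "is_lattice L" and "is_lattice Lf" and "L \<subseteq> Lf"
    and "is_voronoi_region L V" and "is_voronoi_region Lf Vf"
  shows "lmod L V (quant Lf Vf x) =
         quant Lf Vf (lmod L V x) + quant L V (lmod L V (quant Lf Vf x) + x - quant Lf Vf x)"
proof -
  define q where "q = quant Lf Vf x"
  define t where "t = quant L V x"
  define s where "s = quant L V q"
  have q: "q \<in> Lf" "x - q \<in> Vf" using quant_prop[OF assms(5)] q_def by auto
  have t: "t \<in> L" "x - t \<in> V" using quant_prop[OF assms(4)] t_def by auto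
  have s: "s \<in> L" using quant_prop[OF assms(4)] s_def by auto
  have "quant Lf Vf (x - t) = q - t"
    by (rule quant_eq[OF assms(5)]) (use q t assms(3) lat_diff[OF assms(2)] in \<open>auto simp: algebra_simps\<close>)
  moreover have "quant L V (q - s + x - q) = t - s"
    by (rule quant_eq[OF assms(4)]) (use t s lat_diff[OF assms(1)] in \<open>auto simp: algebra_simps\<close>)
  ultimately show ?thesis unfolding lmod_def q_def[symmetric] t_def[symmetric] s_def[symmetric]
    by simp
qed

end
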